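(* For every integer $n\ge1$ and every $w>0$ with $w\ne1$, $$F_n(w)\le\frac{n}{2\sqrt{w}\,|w-1|}.$$
   Context: For $w>0$ and integer $n\ge1$ let $a_n(w)=\sum_{j=0}^n w^j$, $b_n(w)=\sum_{j=1}^n jw^j$, $c_n(w)=\sum_{j=0}^n j^2w^j$, and $$F_n(w)=\frac{1}{2\sqrt{w}}\sqrt{\frac{c_n(w)}{a_n(w)}}\sqrt{\frac{a_n(w)c_n(w)-b_n(w)^2}{w\,a_n(w)^2}}.$$ *)

theory Defs
  imports Complex_Main
begin

definition a_n :: "nat \<Rightarrow> real \<Rightarrow> real" where
  "a_n n w = (\<Sum>j=0..n. w ^ j)"

definition b_n :: "nat \<Rightarrow> real \<Rightarrow> real" where
  "b_n n w = (\<Sum>j=1..n. real j * w ^ j)"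

definition c_n :: "nat \<Rightarrow> real \<Rightarrow> real" where
  "c_n n w = (\<Sum>j=0..n. (real j)^2 * w ^ j)"

definition F_n :: "nat \<Rightarrow> real \<Rightarrow> real" where
  "F_n n w = 1 / (2 * sqrt w) * sqrt (c_n n w / a_n n w)
     * sqrt ((a_n n w * c_n n w - (b_n n w)^2) / (w * (a_n n w)^2))"

end

theory Submission
  imports Defs
begin

lemma la: "a_n n w * (1 - w) = 1 - w^(n+1)"
proof (induction n)
  case 0 then show ?case by (simp add: a_n_def)
next
  case (Suc n)
  have "a_n (Suc n) w * (1-w) = a_n n w * (1-w) + w^(Suc n) * (1-w)"
    by (simp add: a_n_def algebra_simps)
  also have "\<dots> = 1 - w^(n+1) + w^(Suc n) * (1-w)" using Suc by simp
  also have "\<dots> = 1 - w^(Suc n+1)" by (simp add: algebra_simps)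
  finally show ?case .
qed

lemma lb: "b_n n w * (1 - w)^2 = w - (real n + 1) * w^(n+1) + real n * w^(n+2)"
proof (induction n)
  case 0 then show ?case by (simp add: b_n_def)
next
  case (Suc n)
  have "b_n (Suc n) w = b_n n w + real (Suc n) * w^(Suc n)"
    by (simp add: b_n_def)
  then have "b_n (Suc n) w * (1-w)^2 = b_n n w * (1-w)^2 + real (Suc n) * w^(Suc n) * (1-w)^2"
    by (simp add: algebra_simps)
  also have "\<dots> = w - (real n + 1) * w^(n+1) + real n * w^(n+2) + real (Suc n) * w^(Suc n) * (1-w)^2"
    using Suc by simp
  also have "\<dots> = w - (real (Suc n) + 1) * w^(Suc n+1) + real (Suc n) * w^(Suc n+2)"
    by (simp add: algebra_simps power2_eq_square power_add)
  finally show ?case .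
qed

lemma lc: "c_n n w * (1 - w)^3 = w + w^2 - (real n + 1)^2 * w^(n+1)
   + (2*(real n)^2 + 2*real n - 1) * w^(n+2) - (real n)^2 * w^(n+3)"
proof (induction n)
  case 0 then show ?case by (simp add: c_n_def algebra_simps power2_eq_square power3_eq_cube)
next
  case (Suc n)
  have "c_n (Suc n) w = c_n n w + (real (Suc n))^2 * w^(Suc n)"
    by (simp add: c_n_def)
  then have "c_n (Suc n) w * (1-w)^3 = c_n n w * (1-w)^3 + (real (Suc n))^2 * w^(Suc n) * (1-w)^3"
    by (simp add: algebra_simps)
  also have "\<dots> = w + w^2 - (real n + 1)^2 * w^(n+1)
   + (2*(real n)^2 + 2*real n - 1) * w^(n+2) - (real n)^2 * w^(n+3) + (real (Suc n))^2 * w^(Suc n) * (1-w)^3"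
    using Suc by simp
  also have "\<dots> = w + w^2 - (real (Suc n) + 1)^2 * w^(Suc n+1)
   + (2*(real (Suc n))^2 + 2*real (Suc n) - 1) * w^(Suc n+2) - (real (Suc n))^2 * w^(Suc n+3)"
    by (simp add: algebra_simps power2_eq_square power3_eq_cube power4_eq_xxxx power_add)
  finally show ?case .
qed

lemma ident:
  fixes w q N :: real
  shows "(1-q)*(w+w^2-(N+1)^2*q+(2*N^2+2*N-1)*(q*w)-N^2*(q*w^2)) - (w-(N+1)*q+N*(q*w))^2
     = w*(1-q)^2-(N+1)^2*q*(1-w)^2"
  by (simp add: algebra_simps power2_eq_square)

lemma var_bound:
  assumes "w > 0" "w \<noteq> 1"
  shows "(a_n n w * c_n n w - (b_n n w)^2) * (1-w)^2 \<le> w * (a_n n w)^2"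
proof -
  define q where "q = w^(n+1)"
  have q: "q > 0" using assms by (simp add: q_def)
  have A: "a_n n w * (1-w) = 1 - q" using la q_def by simp
  have B: "b_n n w * (1-w)^2 = w - (real n + 1) * q + real n * (q*w)"
    using lb[of n w] by (simp add: q_def)
  have C: "c_n n w * (1-w)^3 = w + w^2 - (real n + 1)^2 * q
   + (2*(real n)^2 + 2*real n - 1) * (q*w) - (real n)^2 * (q*w^2)"
  proof -
    have "w^(n+2) = q*w" "w^(n+3) = q*w^2" by (simp_all add: q_def power_add power2_eq_square power3_eq_cube numeral_3_eq_3)
    then show ?thesis using lc[of n w] by (simp add: q_def)
  qed
  have "(a_n n w * c_n n w - (b_n n w)^2) * (1-w)^4
      = (a_n n w * (1-w)) * (c_n n w * (1-w)^3) - (b_n n w * (1-w)^2)^2"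
    by (simp add: algebra_simps power2_eq_square power3_eq_cube power4_eq_xxxx)
  also have "\<dots> = w*(1-q)^2-(real n+1)^2*q*(1-w)^2"
    unfolding A B C by (rule ident)
  also have "\<dots> \<le> w*(1-q)^2" using q by simp
  also have "\<dots> = w * (a_n n w)^2 * (1-w)^2"
    using A by (simp add: power_mult_distrib[symmetric] mult.assoc)
  finally have "((a_n n w * c_n n w - (b_n n w)^2) * (1-w)^2) * (1-w)^2 \<le> (w * (a_n n w)^2) * (1-w)^2"
    by (simp add: algebra_simps power2_eq_square power4_eq_xxxx)
  moreover have "(1-w)^2 > 0" using assms by simp
  ultimately show ?thesis by simp
qed

theorem mainTheorem11:
  fixes n :: nat and w :: real
  assumes "n \<ge> 1" and "w > 0" and "w \<noteq> 1"
  shows "F_n n w \<le> real n / (2 * sqrt w * \<bar>w - 1\<bar>)"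
proof -
  let ?a = "a_n n w" and ?b = "b_n n w" and ?c = "c_n n w"
  have apos: "?a > 0" unfolding a_n_def using assms(2)
    by (simp add: sum_pos)
  have c0: "?c \<ge> 0" unfolding c_n_def using assms(2) by (intro sum_nonneg) simp
  have cle: "?c \<le> (real n)^2 * ?a" unfolding c_n_def a_n_def sum_distrib_left
    using assms(2) by (intro sum_mono mult_right_mono power_mono) auto
  have s1: "sqrt (?c / ?a) \<le> real n"
  proof -
    have "?c / ?a \<le> (real n)^2" using cle apos by (simp add: divide_simps)
    then have "sqrt (?c / ?a) \<le> sqrt ((real n)^2)" by (rule real_sqrt_le_mono)
    then show ?thesis by simp
  qed
  have s1p: "sqrt (?c / ?a) \<ge> 0" using c0 apos by simp
  have pos2: "(1-w)^2 > 0" using assms by simp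
  have vb: "(?a * ?c - ?b^2) / (w * ?a^2) \<le> 1 / (1-w)^2"
    using var_bound[OF assms(2,3), of n] apos assms(2) pos2
    by (simp add: divide_simps mult.commute mult.left_commute)
  have s2: "sqrt ((?a * ?c - ?b^2) / (w * ?a^2)) \<le> 1 / \<bar>w - 1\<bar>"
  proof -
    have "sqrt ((?a * ?c - ?b^2) / (w * ?a^2)) \<le> sqrt (1/(1-w)^2)"
      using vb by (rule real_sqrt_le_mono)
    also have "sqrt (1/(1-w)^2) = 1 / \<bar>w - 1\<bar>"
      by (simp add: real_sqrt_divide abs_minus_commute)
    finally show ?thesis .
  qed
  have k: "1 / (2 * sqrt w) > 0" using assms by simp
  have "sqrt (?c / ?a) * sqrt ((?a * ?c - ?b^2) / (w * ?a^2)) \<le> real n * (1 / \<bar>w - 1\<bar>)"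
  proof (cases "sqrt ((?a * ?c - ?b^2) / (w * ?a^2)) \<ge> 0")
    case True then show ?thesis using s1 s2 s1p by (intro mult_mono) auto
  next
    case False
    then have "sqrt (?c / ?a) * sqrt ((?a * ?c - ?b^2) / (w * ?a^2)) \<le> 0"
      using s1p by (simp add: mult_nonneg_nonpos)
    also have "0 \<le> real n * (1 / \<bar>w - 1\<bar>)" by simp
    finally show ?thesis .
  qed
  then have "1 / (2 * sqrt w) * (sqrt (?c / ?a) * sqrt ((?a * ?c - ?b^2) / (w * ?a^2)))
     \<le> 1 / (2 * sqrt w) * (real n * (1 / \<bar>w - 1\<bar>))"
    using k by (intro mult_left_mono) auto
  then show ?thesis unfolding F_n_def by (simp add: mult.assoc)
qed

end
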